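(* Let $K^*\in\mathbb{N}$, $M>0$, $p\in\mathbb{N}$, let $\mathcal{Y}\subset\mathbb{R}^{K^*}$ be a closed set, let $f_*:[-M,M]^p\to\mathcal{Y}$ be continuous, and let $g_*:\mathcal{Y}^2\to\mathbb{R}$ be a kernel for which there exists a positive definite kernel $g$ on $\mathcal{Y}^2$ such that $g-g_*$ is positive definite. Let $\sigma:\mathbb{R}\to\mathbb{R}$ be either the ReLU function or a function that is non-constant, continuous, bounded and monotonically increasing. Then for every $\varepsilon>0$, for sufficiently large $K_+,K_-\in\mathbb{N}$, $T_+=T_+(K_+)\in\mathbb{N}$, $T_-=T_-(K_-)\in\mathbb{N}$, there exist $\boldsymbol A\in\mathbb{R}^{K_+\times T_+}$, $\boldsymbol B\in\mathbb{R}^{T_+\times p}$, $\boldsymbol c\in\mathbb{R}^{T_+}$, $\boldsymbol E\in\mathbb{R}^{K_-\times T_-}$, $\boldsymbol F\in\mathbb{R}^{T_-\times p}$, $\boldsymbol o\in\mathbb{R}^{T_-}$ such that \[ \Big| g_*\big(f_*(\boldsymbol x),f_*(\boldsymbol x')\big) - \big( \langle f_{\boldsymbol\psi}(\boldsymbol x), f_{\boldsymbol\psi}(\boldsymbol x')\rangle - \langle r_{\boldsymbol\zeta}(\boldsymbol x), r_{\boldsymbol\zeta}(\boldsymbol x')\rangle\big)\Big| < \varepsilon \] for all $(\boldsymbol x,\boldsymbol x')\in[-M,M]^{2p}$, where $f_{\boldsymbol\psi}(\boldsymbol x)=\boldsymbol A\,\boldsymbol\sigma(\boldsymbol B\boldsymbol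 x+\boldsymbol c)\in\mathbb{R}^{K_+}$ and $r_{\boldsymbol\zeta}(\boldsymbol x)=\boldsymbol E\,\boldsymbol\sigma(\boldsymbol F\boldsymbol x+\boldsymbol o)\in\mathbb{R}^{K_-}$, and $\boldsymbol\sigma$ denotes $\sigma$ applied element-wise.
   Context: A kernel on $\mathcal{Y}^2$ is a symmetric continuous function $g:\mathcal{Y}^2\to\mathbb{R}$. A kernel $g$ is positive definite (PD) if $\sum_{i=1}^n\sum_{j=1}^n c_ic_j g(\boldsymbol y_i,\boldsymbol y_j)\ge 0$ for all $n\in\mathbb{N}$, all $\boldsymbol y_1,\dots,\boldsymbol y_n\in\mathcal{Y}$ and all $c_1,\dots,c_n\in\mathbb{R}$. $\langle\cdot,\cdot\rangle$ is the Euclidean inner product. *)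

theory Defs
  imports "HOL-Analysis.Analysis"
begin

definition is_kernel :: "'a::topological_space set \<Rightarrow> ('a \<Rightarrow> 'a \<Rightarrow> real) \<Rightarrow> bool" where
  "is_kernel Y g \<longleftrightarrow> (\<forall>y\<in>Y. \<forall>y'\<in>Y. g y y' = g y' y)
     \<and> continuous_on (Y \<times> Y) (\<lambda>(y, y'). g y y')"

definition pd_on :: "'a set \<Rightarrow> ('a \<Rightarrow> 'a \<Rightarrow> real) \<Rightarrow> bool" where
  "pd_on Y g \<longleftrightarrow> (\<forall>(n::nat) (ys::nat \<Rightarrow> 'a) (c::nat \<Rightarrow> real).
     (\<forall>i<n. ys i \<in> Y) \<longrightarrow> (\<Sum>i<n. \<Sum>j<n. c i * c j * g (ys i) (ys j)) \<ge> 0)"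

definition pd_kernel :: "'a::topological_space set \<Rightarrow> ('a \<Rightarrow> 'a \<Rightarrow> real) \<Rightarrow> bool" where
  "pd_kernel Y g \<longleftrightarrow> is_kernel Y g \<and> pd_on Y g"

definition relu :: "real \<Rightarrow> real" where
  "relu x = max 0 x"

definition cube :: "real \<Rightarrow> (real ^ 'p) set" where
  "cube M = {x. \<forall>i. \<bar>x $ i\<bar> \<le> M}"

text \<open>One-hidden-layer network x \<mapsto> A \<sigma>(B x + c), with A a K\<times>T matrix
  (entries A i t, i<K, t<T), B a T\<times>p matrix (row t is B t), c \<in> R^T.
  The output is a vector in R^K, represented as a function on {0..<K}.\<close>
definition shallow_net ::
  "(real \<Rightarrow> real) \<Rightarrow> nat \<Rightarrow> (nat \<Rightarrow> nat \<Rightarrow> real) \<Rightarrow> (nat \<Rightarrow> real ^ 'p) \<Rightarrow> (nat \<Rightarrow> real)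
     \<Rightarrow> real ^ 'p \<Rightarrow> nat \<Rightarrow> real" where
  "shallow_net \<sigma> T A B c x i = (\<Sum>t<T. A i t * \<sigma> (B t \<bullet> x + c t))"

definition inner_K :: "nat \<Rightarrow> (nat \<Rightarrow> real) \<Rightarrow> (nat \<Rightarrow> real) \<Rightarrow> real" where
  "inner_K K u v = (\<Sum>i<K. u i * v i)"

end

theory Submission
  imports Defs
begin

definition netf :: "(real \<Rightarrow> real) \<Rightarrow> nat \<Rightarrow> (nat \<Rightarrow> real) \<Rightarrow> (nat \<Rightarrow> real ^ 'p) \<Rightarrow> (nat \<Rightarrow> real) \<Rightarrow> real ^ 'p \<Rightarrow> real" where
  "netf \<sigma> T a b c x = (\<Sum>s<T. a s * \<sigma> (b s \<bullet> x + c s))"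

definition NS :: "(real \<Rightarrow> real) \<Rightarrow> real \<Rightarrow> (real ^ 'p \<Rightarrow> real) set" where
  "NS \<sigma> M = {\<phi>. \<forall>\<delta>>0. \<exists>T a b c. \<forall>x\<in>cube M. \<bar>\<phi> x - netf \<sigma> T a b c x\<bar> < \<delta>}"

definition cat :: "nat \<Rightarrow> (nat \<Rightarrow> 'a) \<Rightarrow> (nat \<Rightarrow> 'a) \<Rightarrow> nat \<Rightarrow> 'a" where
  "cat T f g s = (if s < T then f s else g (s - T))"

lemma sum_cat: "(\<Sum>s<T1+T2. cat T1 f g s) = (\<Sum>s<T1. f s) + (\<Sum>s<T2. (g s :: 'a::comm_monoid_add))"
proof -
  have "(\<Sum>s<T1+T2. cat T1 f g s) = (\<Sum>s\<in>{0..<T1}. cat T1 f g s) + (\<Sum>s\<in>{T1..<T1+T2}. cat T1 f g s)"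
    by (metis atLeast0LessThan le_add1 sum.atLeastLessThan_concat zero_le)
  also have "(\<Sum>s\<in>{0..<T1}. cat T1 f g s) = (\<Sum>s<T1. f s)"
    by (auto simp: cat_def atLeast0LessThan intro: sum.cong)
  also have "(\<Sum>s\<in>{T1..<T1+T2}. cat T1 f g s) = (\<Sum>s\<in>{0..<T2}. cat T1 f g (s + T1))"
    using sum.shift_bounds_nat_ivl[of "cat T1 f g" 0 T1 T2] by (simp add: add.commute)
  also have "\<dots> = (\<Sum>s<T2. g s)"
    by (auto simp: cat_def atLeast0LessThan intro: sum.cong)
  finally show ?thesis .
qed

lemma netf_cat: "netf \<sigma> (T1+T2) (cat T1 a1 a2) (cat T1 b1 b2) (cat T1 c1 c2) x
   = netf \<sigma> T1 a1 b1 c1 x + netf \<sigma> T2 a2 b2 c2 x"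
proof -
  have "netf \<sigma> (T1+T2) (cat T1 a1 a2) (cat T1 b1 b2) (cat T1 c1 c2) x
     = (\<Sum>s<T1+T2. cat T1 (\<lambda>s. a1 s * \<sigma> (b1 s \<bullet> x + c1 s)) (\<lambda>s. a2 s * \<sigma> (b2 s \<bullet> x + c2 s)) s)"
    unfolding netf_def by (rule sum.cong) (auto simp: cat_def)
  then show ?thesis by (simp add: sum_cat netf_def)
qed

lemma netf_scale: "netf \<sigma> T (\<lambda>s. k * a s) b c x = k * netf \<sigma> T a b c x"
  by (simp add: netf_def sum_distrib_left mult.assoc)

lemma NS_netf: "netf \<sigma> T a b c \<in> NS \<sigma> M"
  unfolding NS_def by (intro CollectI allI impI exI[of _ T] exI[of _ a] exI[of _ b] exI[of _ c]) auto

lemma NS_add: fixes f g :: "real^'p \<Rightarrow> real" assumes "f \<in> NS \<sigma> M" "g \<in> NS \<sigma> M" shows "(\<lambda>x. f x + g x) \<in> NS \<sigma> M"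
  unfolding NS_def
proof (intro CollectI allI impI)
  fix \<delta> :: real assume "\<delta> > 0"
  then have "\<delta>/2 > 0" by simp
  then obtain T1 a1 b1 c1 where 1: "\<forall>x\<in>cube M. \<bar>f x - netf \<sigma> T1 a1 b1 c1 x\<bar> < \<delta>/2"
    using assms(1) unfolding NS_def by blast
  obtain T2 a2 b2 c2 where 2: "\<forall>x\<in>cube M. \<bar>g x - netf \<sigma> T2 a2 b2 c2 x\<bar> < \<delta>/2"
    using assms(2) \<open>\<delta>/2 > 0\<close> unfolding NS_def by blast
  show "\<exists>T a b c. \<forall>x::real^'p\<in>cube M. \<bar>f x + g x - netf \<sigma> T a b c x\<bar> < \<delta>"
  proof (intro exI ballI)
    fix x :: "real^'p" assume x: "x \<in> cube M"
    show "\<bar>f x + g x - netf \<sigma> (T1+T2) (cat T1 a1 a2) (cat T1 b1 b2) (cat T1 c1 c2) x\<bar> < \<delta>"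
    proof -
      have "\<bar>f x - netf \<sigma> T1 a1 b1 c1 x\<bar> < \<delta>/2" "\<bar>g x - netf \<sigma> T2 a2 b2 c2 x\<bar> < \<delta>/2"
        using 1 2 x by auto
      then show ?thesis unfolding netf_cat abs_less_iff by linarith
    qed
  qed
qed

lemma NS_scale: fixes f :: "real^'p \<Rightarrow> real" assumes "f \<in> NS \<sigma> M" shows "(\<lambda>x. k * f x) \<in> NS \<sigma> M"
  unfolding NS_def
proof (intro CollectI allI impI)
  fix \<delta> :: real assume "\<delta> > 0"
  then have "\<delta>/(\<bar>k\<bar>+1) > 0" by simp
  then obtain T a b c where 1: "\<forall>x\<in>cube M. \<bar>f x - netf \<sigma> T a b c x\<bar> < \<delta>/(\<bar>k\<bar>+1)"
    using assms(1) unfolding NS_def by blast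
  show "\<exists>T a b c. \<forall>x::real^'p\<in>cube M. \<bar>k * f x - netf \<sigma> T a b c x\<bar> < \<delta>"
  proof (intro exI ballI)
    fix x :: "real^'p" assume x: "x \<in> cube M"
    have "\<bar>k * f x - netf \<sigma> T (\<lambda>s. k * a s) b c x\<bar> = \<bar>k\<bar> * \<bar>f x - netf \<sigma> T a b c x\<bar>"
      by (simp add: netf_scale abs_mult[symmetric] right_diff_distrib)
    also have "\<dots> \<le> \<bar>k\<bar> * (\<delta>/(\<bar>k\<bar>+1))"
      using 1 x by (intro mult_left_mono) auto
    also have "\<dots> < \<delta>" using \<open>\<delta>>0\<close> by (simp add: field_simps)
    finally show "\<bar>k * f x - netf \<sigma> T (\<lambda>s. k * a s) b c x\<bar> < \<delta>" .
  qed
qed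

lemma NS_limit: fixes f :: "real^'p \<Rightarrow> real" assumes "\<And>\<delta>. \<delta> > 0 \<Longrightarrow> \<exists>g\<in>NS \<sigma> M. \<forall>x\<in>cube M. \<bar>f x - g x\<bar> < \<delta>"
  shows "f \<in> NS \<sigma> M"
  unfolding NS_def
proof (intro CollectI allI impI)
  fix \<delta> :: real assume "\<delta> > 0"
  then have d2: "\<delta>/2 > 0" by simp
  then obtain g where g: "g \<in> NS \<sigma> M" "\<forall>x\<in>cube M. \<bar>f x - g x\<bar> < \<delta>/2"
    using assms by blast
  from g(1) have "\<forall>\<delta>>0. \<exists>T a b c. \<forall>x\<in>cube M. \<bar>g x - netf \<sigma> T a b c x\<bar> < \<delta>"
    unfolding NS_def by simp
  then obtain T a b c where 1: "\<forall>x\<in>cube M. \<bar>g x - netf \<sigma> T a b c x\<bar> < \<delta>/2"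
    using d2 by blast
  show "\<exists>T a b c. \<forall>x::real^'p\<in>cube M. \<bar>f x - netf \<sigma> T a b c x\<bar> < \<delta>"
  proof (rule exI[of _ T], rule exI[of _ a], rule exI[of _ b], rule exI[of _ c], intro ballI)
    fix x :: "real^'p" assume x: "x \<in> cube M"
    have "\<bar>f x - g x\<bar> < \<delta>/2" "\<bar>g x - netf \<sigma> T a b c x\<bar> < \<delta>/2"
      using 1 g(2) x by auto
    then show "\<bar>f x - netf \<sigma> T a b c x\<bar> < \<delta>" unfolding abs_less_iff by linarith
  qed
qed

lemma NS_const: assumes "\<sigma> cz \<noteq> 0" shows "(\<lambda>x::real^'p. k) \<in> NS \<sigma> M"
proof -
  have eq: "netf \<sigma> 1 (\<lambda>_. k / \<sigma> cz) (\<lambda>_. 0) (\<lambda>_. cz) = (\<lambda>x::real^'p. k)"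
    using assms by (auto simp: netf_def)
  have "(netf \<sigma> 1 (\<lambda>_. k / \<sigma> cz) (\<lambda>_. 0) (\<lambda>_. cz) :: real^'p \<Rightarrow> real) \<in> NS \<sigma> M"
    by (rule NS_netf)
  then show ?thesis unfolding eq .
qed

lemma NS_ridge: "(\<lambda>x. \<sigma> (b \<bullet> x + c)) \<in> NS \<sigma> M"
proof -
  have "netf \<sigma> 1 (\<lambda>_. 1) (\<lambda>_. b) (\<lambda>_. c) = (\<lambda>x. \<sigma> (b \<bullet> x + c))"
    by (auto simp: netf_def)
  then show ?thesis using NS_netf by metis
qed

lemma NS_sum: fixes n :: nat and f :: "nat \<Rightarrow> real^'p \<Rightarrow> real" assumes "\<sigma> cz \<noteq> 0"
  shows "(\<forall>k<n. f k \<in> NS \<sigma> M) \<Longrightarrow> (\<lambda>x. \<Sum>k<n. f k x) \<in> NS \<sigma> M"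
proof (induction n)
  case 0 then show ?case using NS_const[of \<sigma> cz, OF assms(1)] by simp
next
  case (Suc n)
  then show ?case using NS_add[of "\<lambda>x. \<Sum>k<n. f k x" \<sigma> M "f n"] by simp
qed



lemma univ_approx:
  fixes H g :: "real \<Rightarrow> real" and a b \<delta> :: real
  assumes H01: "\<And>s. 0 \<le> H s \<and> H s \<le> 1"
    and Hlo: "\<And>\<eta>. \<eta> > 0 \<Longrightarrow> \<exists>L. \<forall>s\<le>-L. H s < \<eta>"
    and Hhi: "\<And>\<eta>. \<eta> > 0 \<Longrightarrow> \<exists>L. \<forall>s\<ge>L. H s > 1 - \<eta>"
    and ab: "a < b" and g: "continuous_on {a..b} g" and \<delta>: "\<delta> > 0"
  shows "\<exists>(n::nat) lam m D. \<forall>t\<in>{a..b}. \<bar>g t - (g a + (\<Sum>k<n. D k * H (lam * t + m k)))\<bar> < \<delta>"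
proof -
  have "uniformly_continuous_on {a..b} g"
    using g compact_uniformly_continuous by blast
  then obtain d where d: "d > 0" "\<And>x x'. x \<in> {a..b} \<Longrightarrow> x' \<in> {a..b} \<Longrightarrow> dist x' x < d \<Longrightarrow> dist (g x') (g x) < \<delta>/3"
    unfolding uniformly_continuous_on_def using \<delta> by (metis divide_pos_pos zero_less_numeral)
  define n :: nat where "n = nat \<lceil>(b-a)/d\<rceil> + 1"
  have npos: "n > 0" unfolding n_def by simp
  have "(b-a)/d < real n" unfolding n_def by linarith
  then have "b - a < real n * d" using d(1) by (simp add: field_simps)
  define h where "h = (b-a)/n"
  have hpos: "h > 0" unfolding h_def using ab npos by simp
  have hd: "h < d" unfolding h_def using \<open>b - a < real n * d\<close> npos by (simp add: field_simps)
  have nh: "a + real n * h = b" unfolding h_def using npos by simp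
  define tk where "tk k = a + real k * h" for k :: nat
  have tk_in: "tk k \<in> {a..b}" if "k \<le> n" for k
  proof -
    have "real k * h \<le> real n * h" using that hpos by (simp add: mult_right_mono)
    then show ?thesis unfolding tk_def using hpos nh by auto
  qed
  define D where "D k = g (tk (Suc k)) - g (tk k)" for k
  have Dsmall: "\<bar>D k\<bar> < \<delta>/3" if "k < n" for k
  proof -
    have "dist (tk (Suc k)) (tk k) < d" unfolding tk_def dist_real_def using hd hpos
      by (simp add: algebra_simps)
    then have "dist (g (tk (Suc k))) (g (tk k)) < \<delta>/3"
      using d(2) tk_in that by simp
    then show ?thesis unfolding D_def dist_real_def .
  qed
  define \<eta> where "\<eta> = 1 / (real n + 1)"
  have \<eta>pos: "\<eta> > 0" unfolding \<eta>_def by simp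
  obtain L1 where L1: "\<forall>s\<le>-L1. H s < \<eta>" using Hlo \<eta>pos by blast
  obtain L2 where L2: "\<forall>s\<ge>L2. H s > 1 - \<eta>" using Hhi \<eta>pos by blast
  define L where "L = max 1 (max L1 L2)"
  have Lpos: "L > 0" unfolding L_def by simp
  define lam where "lam = 2 * L / h"
  define m where "m k = - lam * (tk k + h/2)" for k
  have lamh: "lam * (h/2) = L" unfolding lam_def using hpos by simp
  have lampos: "lam > 0" unfolding lam_def using hpos Lpos by simp
  show ?thesis
  proof (rule exI[of _ n], rule exI[of _ lam], rule exI[of _ m], rule exI[of _ D], intro ballI)
    fix t assume t: "t \<in> {a..b}"
    define j where "j = min (n - 1) (nat \<lfloor>(t-a)/h\<rfloor>)"
    have jn: "j < n" unfolding j_def using npos by simp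
    have tj: "tk j \<le> t"
    proof -
      have "real j \<le> real (nat \<lfloor>(t-a)/h\<rfloor>)" unfolding j_def by simp
      also have "\<dots> = real_of_int \<lfloor>(t-a)/h\<rfloor>" using t hpos by (intro of_nat_nat) simp
      also have "\<dots> \<le> (t-a)/h" by (rule of_int_floor_le)
      finally have "real j \<le> (t-a)/h" .
      then show ?thesis unfolding tk_def using hpos by (simp add: field_simps)
    qed
    have tj1: "t \<le> tk (Suc j)"
    proof (cases "nat \<lfloor>(t-a)/h\<rfloor> \<le> n - 1")
      case True
      then have "j = nat \<lfloor>(t-a)/h\<rfloor>" unfolding j_def by simp
      moreover have "(t-a)/h \<ge> 0" using t hpos by simp
      ultimately have "(t-a)/h \<le> real j + 1" by linarith
      then show ?thesis unfolding tk_def using hpos by (simp add: field_simps)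
    next
      case False
      then have "j = n - 1" unfolding j_def by simp
      then have "Suc j = n" using npos by simp
      then show ?thesis using nh t unfolding tk_def by simp
    qed
    define r where "r k = H (lam * t + m k) - (if k < j then 1 else 0)" for k
    have r_lt: "\<bar>r k\<bar> < \<eta>" if "k < j" for k
    proof -
      have "real (Suc k) * h \<le> real j * h" using that hpos by (intro mult_right_mono) auto
      then have "tk k + h/2 + h/2 \<le> tk j" unfolding tk_def by (simp add: algebra_simps)
      then have "t - (tk k + h/2) \<ge> h/2" using tj by linarith
      then have "lam * (t - (tk k + h/2)) \<ge> lam * (h/2)" using lampos by (intro mult_left_mono) auto
      then have "lam * t + m k \<ge> L2" using lamh unfolding m_def L_def by (simp add: algebra_simps)
      then have "H (lam * t + m k) > 1 - \<eta>" using L2 by simp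
      then show ?thesis unfolding r_def using that H01[of "lam * t + m k"] by simp
    qed
    have r_gt: "\<bar>r k\<bar> < \<eta>" if "k > j" for k
    proof -
      have "tk (Suc j) + h/2 \<le> tk k + h/2" unfolding tk_def using that hpos
        by (simp add: mult_right_mono)
      then have "t - (tk k + h/2) \<le> - (h/2)" using tj1 by linarith
      then have "lam * (t - (tk k + h/2)) \<le> lam * (-(h/2))" using lampos by (intro mult_left_mono) auto
      then have "lam * t + m k \<le> - L1" using lamh unfolding m_def L_def by (simp add: algebra_simps)
      then have "H (lam * t + m k) < \<eta>" using L1 by simp
      then show ?thesis unfolding r_def using that H01[of "lam * t + m k"] by simp
    qed
    have r_j: "\<bar>r j\<bar> \<le> 1" unfolding r_def using H01[of "lam * t + m j"] by simp
    have split: "(\<Sum>k<n. D k * H (lam * t + m k)) = (\<Sum>k<n. D k * (if k < j then 1 else 0)) + (\<Sum>k<n. D k * r k)"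
      unfolding r_def by (simp add: sum.distrib[symmetric] algebra_simps)
    have s1: "(\<Sum>k<n. D k * (if k < j then 1 else 0)) = g (tk j) - g a"
    proof -
      have "(\<Sum>k<n. D k * (if k < j then 1 else 0)) = (\<Sum>k<j. D k)"
        using jn by (intro sum.mono_neutral_cong_right) auto
      also have "\<dots> = g (tk j) - g (tk 0)" unfolding D_def by (rule sum_lessThan_telescope)
      finally show ?thesis unfolding tk_def by simp
    qed
    have s2: "(\<Sum>k<n. D k * r k) = D j * r j + (\<Sum>k\<in>{..<n}-{j}. D k * r k)"
      using jn by (simp add: sum.remove)
    have rest: "\<bar>\<Sum>k\<in>{..<n}-{j}. D k * r k\<bar> \<le> real n * (\<delta>/3 * \<eta>)"
    proof -
      have "\<bar>\<Sum>k\<in>{..<n}-{j}. D k * r k\<bar> \<le> (\<Sum>k\<in>{..<n}-{j}. \<bar>D k * r k\<bar>)" by (rule sum_abs)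
      also have "\<dots> \<le> (\<Sum>k\<in>{..<n}-{j}. \<delta>/3 * \<eta>)"
      proof (rule sum_mono)
        fix k assume k: "k \<in> {..<n}-{j}"
        then have "\<bar>r k\<bar> < \<eta>" using r_lt r_gt by (cases "k < j") auto
        moreover have "\<bar>D k\<bar> < \<delta>/3" using Dsmall k by simp
        ultimately show "\<bar>D k * r k\<bar> \<le> \<delta>/3 * \<eta>" unfolding abs_mult
          by (intro mult_mono) auto
      qed
      also have "\<dots> \<le> real n * (\<delta>/3 * \<eta>)"
        using jn \<eta>pos \<delta> by (simp add: card_Diff_singleton)
      finally show ?thesis .
    qed
    have "real n * (\<delta>/3 * \<eta>) \<le> \<delta>/3"
    proof -
      have "real n * \<eta> \<le> 1" unfolding \<eta>_def by (simp add: field_simps)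
      then have "(\<delta>/3) * (real n * \<eta>) \<le> (\<delta>/3) * 1" using \<delta> by (intro mult_left_mono) auto
      then show ?thesis by (simp add: algebra_simps)
    qed
    have Djr: "\<bar>D j * r j\<bar> < \<delta>/3"
    proof -
      have "\<bar>D j * r j\<bar> \<le> \<bar>D j\<bar>" unfolding abs_mult using r_j by (simp add: mult_left_le)
      then show ?thesis using Dsmall[OF jn] by linarith
    qed
    have gt: "\<bar>g t - g (tk j)\<bar> < \<delta>/3"
    proof -
      have "dist t (tk j) < d" unfolding dist_real_def using tj tj1 hd unfolding tk_def
        by (simp add: algebra_simps)
      then show ?thesis using d(2)[of "tk j" t] tk_in jn t by (simp add: dist_real_def)
    qed
    have "g t - (g a + (\<Sum>k<n. D k * H (lam * t + m k)))
        = (g t - g (tk j)) - D j * r j - (\<Sum>k\<in>{..<n}-{j}. D k * r k)"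
      unfolding split s1 s2 by simp
    then show "\<bar>g t - (g a + (\<Sum>k<n. D k * H (lam * t + m k)))\<bar> < \<delta>"
      using gt Djr rest \<open>real n * (\<delta>/3 * \<eta>) \<le> \<delta>/3\<close> unfolding abs_less_iff abs_le_iff by linarith
  qed
qed



lemma NS_H:
  fixes b :: "real^'p"
  assumes Hr: "\<And>s. H s = \<alpha> * \<sigma> s + \<beta> * \<sigma> (s - 1) + \<gamma>" and c0: "\<sigma> c0 \<noteq> 0"
  shows "(\<lambda>x::real^'p. H (b \<bullet> x + c)) \<in> NS \<sigma> M"
proof -
  have 1: "(\<lambda>x::real^'p. \<alpha> * \<sigma> (b \<bullet> x + c)) \<in> NS \<sigma> M" by (intro NS_scale NS_ridge)
  have 2: "(\<lambda>x::real^'p. \<beta> * \<sigma> (b \<bullet> x + (c - 1))) \<in> NS \<sigma> M" by (intro NS_scale NS_ridge)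
  have 3: "(\<lambda>x::real^'p. \<gamma>) \<in> NS \<sigma> M" by (rule NS_const[where \<sigma>=\<sigma> and cz=c0, OF c0])
  have "(\<lambda>x::real^'p. \<alpha> * \<sigma> (b \<bullet> x + c) + \<beta> * \<sigma> (b \<bullet> x + (c - 1)) + \<gamma>) \<in> NS \<sigma> M"
    by (intro NS_add 1 2 3)
  moreover have "(\<lambda>x::real^'p. \<alpha> * \<sigma> (b \<bullet> x + c) + \<beta> * \<sigma> (b \<bullet> x + (c - 1)) + \<gamma>) = (\<lambda>x. H (b \<bullet> x + c))"
    using Hr by (simp add: algebra_simps)
  ultimately show ?thesis by simp
qed

lemma cube_bound:
  fixes w x :: "real^'p"
  assumes "x \<in> cube M"
  shows "\<bar>w \<bullet> x\<bar> \<le> norm w * (real CARD('p) * \<bar>M\<bar>)"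
proof -
  have "norm x \<le> (\<Sum>i\<in>UNIV. \<bar>x$i\<bar>)" by (rule norm_le_l1_cart)
  also have "\<dots> \<le> (\<Sum>i\<in>(UNIV::'p set). \<bar>M\<bar>)" using assms unfolding cube_def
    by (intro sum_mono) (auto intro: order_trans[OF _ abs_ge_self])
  also have "\<dots> = real CARD('p) * \<bar>M\<bar>" by simp
  finally have "norm x \<le> real CARD('p) * \<bar>M\<bar>" .
  then have "norm w * norm x \<le> norm w * (real CARD('p) * \<bar>M\<bar>)" by (intro mult_left_mono) auto
  moreover have "\<bar>w \<bullet> x\<bar> \<le> norm w * norm x" by (rule Cauchy_Schwarz_ineq2)
  ultimately show ?thesis by linarith
qed

lemma exp_NS:
  fixes w :: "real^'p"
  assumes H01: "\<And>s. 0 \<le> H s \<and> H s \<le> 1"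
    and Hlo: "\<And>\<eta>. \<eta> > 0 \<Longrightarrow> \<exists>L. \<forall>s\<le>-L. H s < \<eta>"
    and Hhi: "\<And>\<eta>. \<eta> > 0 \<Longrightarrow> \<exists>L. \<forall>s\<ge>L. H s > 1 - \<eta>"
    and Hr: "\<And>s. H s = \<alpha> * \<sigma> s + \<beta> * \<sigma> (s - 1) + \<gamma>" and c0: "\<sigma> c0 \<noteq> 0"
  shows "(\<lambda>x::real^'p. exp (w \<bullet> x)) \<in> NS \<sigma> M"
proof (rule NS_limit)
  fix \<delta> :: real assume \<delta>: "\<delta> > 0"
  define R where "R = norm w * (real CARD('p) * \<bar>M\<bar>) + 1"
  have R: "R > 0" unfolding R_def by (simp add: add_nonneg_pos)
  have "continuous_on {-R..R} exp" by (intro continuous_intros)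
  then obtain n :: nat and lam m D where approx:
    "\<forall>t\<in>{-R..R}. \<bar>exp t - (exp (-R) + (\<Sum>k<n. D k * H (lam * t + m k)))\<bar> < \<delta>"
    using univ_approx[OF H01 Hlo Hhi, of "-R" R exp \<delta>] R \<delta> by auto
  define \<psi> where "\<psi> = (\<lambda>x::real^'p. exp (-R) + (\<Sum>k<n. D k * H ((lam *\<^sub>R w) \<bullet> x + m k)))"
  have "\<psi> \<in> NS \<sigma> M" unfolding \<psi>_def
    by (intro NS_add NS_const[where \<sigma>=\<sigma> and cz=c0, OF c0] NS_sum[where \<sigma>=\<sigma> and cz=c0, OF c0] allI impI NS_scale NS_H[OF Hr c0])
  moreover have "\<forall>x\<in>cube M. \<bar>exp (w \<bullet> x) - \<psi> x\<bar> < \<delta>"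
  proof
    fix x :: "real^'p" assume x: "x \<in> cube M"
    have "\<bar>w \<bullet> x\<bar> \<le> R" using cube_bound[OF x, of w] unfolding R_def by simp
    then have "w \<bullet> x \<in> {-R..R}" by auto
    then have "\<bar>exp (w \<bullet> x) - (exp (-R) + (\<Sum>k<n. D k * H (lam * (w \<bullet> x) + m k)))\<bar> < \<delta>"
      using approx by blast
    then show "\<bar>exp (w \<bullet> x) - \<psi> x\<bar> < \<delta>" unfolding \<psi>_def by simp
  qed
  ultimately show "\<exists>g\<in>NS \<sigma> M. \<forall>x\<in>cube M. \<bar>exp (w \<bullet> x) - g x\<bar> < \<delta>" by blast
qed

lemma sigma_H:
  assumes "\<sigma> = relu \<or> ((\<exists>a b. \<sigma> a \<noteq> \<sigma> b) \<and> continuous_on UNIV \<sigma> \<and> bounded (range \<sigma>) \<and> mono \<sigma>)"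
  shows "\<exists>H \<alpha> \<beta> \<gamma> c0. \<sigma> c0 \<noteq> 0 \<and> (\<forall>s. 0 \<le> H s \<and> H s \<le> 1) \<and> (\<forall>\<eta>>0. \<exists>L. \<forall>s\<le>-L. H s < \<eta>)
     \<and> (\<forall>\<eta>>0. \<exists>L. \<forall>s\<ge>L. H s > 1 - \<eta>) \<and> (\<forall>s. H s = \<alpha> * \<sigma> s + \<beta> * \<sigma> (s - 1) + \<gamma>)"
  using assms
proof
  assume r: "\<sigma> = relu"
  define H where "H s = relu s - relu (s - 1)" for s
  have "\<sigma> 1 \<noteq> 0" using r by (simp add: relu_def)
  moreover have "\<forall>s. 0 \<le> H s \<and> H s \<le> 1" unfolding H_def relu_def by auto
  moreover have "\<forall>\<eta>>0. \<exists>L. \<forall>s\<le>-L. H s < \<eta>"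
    by (intro allI impI exI[of _ 0]) (auto simp: H_def relu_def)
  moreover have "\<forall>\<eta>>0. \<exists>L. \<forall>s\<ge>L. H s > 1 - \<eta>"
    by (intro allI impI exI[of _ 1]) (auto simp: H_def relu_def)
  moreover have "\<forall>s. H s = 1 * \<sigma> s + (-1) * \<sigma> (s - 1) + 0" using r by (simp add: H_def)
  ultimately show ?thesis by blast
next
  assume s: "(\<exists>a b. \<sigma> a \<noteq> \<sigma> b) \<and> continuous_on UNIV \<sigma> \<and> bounded (range \<sigma>) \<and> mono \<sigma>"
  then obtain a b where ab: "\<sigma> a \<noteq> \<sigma> b" by blast
  have bda: "bdd_above (range \<sigma>)" and bdb: "bdd_below (range \<sigma>)"
    using s by (simp_all add: bounded_imp_bdd_above bounded_imp_bdd_below)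
  have mono: "mono \<sigma>" using s by blast
  define u where "u = Sup (range \<sigma>)"
  define l where "l = Inf (range \<sigma>)"
  have le_u: "\<sigma> x \<le> u" for x unfolding u_def using bda by (intro cSup_upper) auto
  have l_le: "l \<le> \<sigma> x" for x unfolding l_def using bdb by (intro cInf_lower) auto
  have lu: "l < u"
  proof (rule ccontr)
    assume "\<not> l < u"
    then have "\<sigma> a = \<sigma> b" using le_u[of a] le_u[of b] l_le[of a] l_le[of b] by linarith
    then show False using ab by simp
  qed
  obtain c0 where c0: "\<sigma> c0 \<noteq> 0" using ab by metis
  define H where "H s = (\<sigma> s - l) / (u - l)" for s
  have "\<forall>s. 0 \<le> H s \<and> H s \<le> 1" unfolding H_def using lu le_u l_le by (simp add: field_simps)
  moreover have "\<forall>\<eta>>0. \<exists>L. \<forall>s\<le>-L. H s < \<eta>"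
  proof (intro allI impI)
    fix \<eta> :: real assume "\<eta> > 0"
    then have "l + \<eta> * (u - l) > l" using lu by simp
    then have "Inf (range \<sigma>) < l + \<eta> * (u - l)" unfolding l_def by simp
    then have "\<exists>x\<in>range \<sigma>. x < l + \<eta> * (u - l)" using cInf_less_iff[of "range \<sigma>"] bdb by blast
    then obtain s0 where s0: "\<sigma> s0 < l + \<eta> * (u - l)" by blast
    show "\<exists>L. \<forall>s\<le>-L. H s < \<eta>"
    proof (intro exI[of _ "-s0"] allI impI)
      fix s assume "s \<le> - (- s0)"
      then have "\<sigma> s \<le> \<sigma> s0" using mono by (simp add: monoD)
      then show "H s < \<eta>" unfolding H_def using s0 lu by (simp add: field_simps)
    qed
  qed
  moreover have "\<forall>\<eta>>0. \<exists>L. \<forall>s\<ge>L. H s > 1 - \<eta>"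
  proof (intro allI impI)
    fix \<eta> :: real assume "\<eta> > 0"
    then have "u - \<eta> * (u - l) < u" using lu by simp
    then have "u - \<eta> * (u - l) < Sup (range \<sigma>)" unfolding u_def by simp
    then have "\<exists>x\<in>range \<sigma>. u - \<eta> * (u - l) < x" using less_cSup_iff[of "range \<sigma>"] bda by blast
    then obtain s0 where s0: "\<sigma> s0 > u - \<eta> * (u - l)" by blast
    show "\<exists>L. \<forall>s\<ge>L. H s > 1 - \<eta>"
    proof (intro exI[of _ s0] allI impI)
      fix s assume "s \<ge> s0"
      then have "\<sigma> s \<ge> \<sigma> s0" using mono by (simp add: monoD)
      then show "H s > 1 - \<eta>" unfolding H_def using s0 lu by (simp add: field_simps)
    qed
  qed
  moreover have "\<forall>s. H s = (1/(u-l)) * \<sigma> s + 0 * \<sigma> (s - 1) + (- l/(u-l))"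
    unfolding H_def by (simp add: diff_divide_distrib)
  ultimately show ?thesis using c0 by blast
qed



inductive_set EXPS :: "(((real^'p) \<times> (real^'p)) \<Rightarrow> real) set" where
  EX_base: "(\<lambda>z. exp (w \<bullet> z)) \<in> EXPS"
| EX_add: "f \<in> EXPS \<Longrightarrow> g \<in> EXPS \<Longrightarrow> (\<lambda>z. f z + g z) \<in> EXPS"
| EX_scale: "f \<in> EXPS \<Longrightarrow> (\<lambda>z. k * f z) \<in> EXPS"

lemma EXPS_const: "(\<lambda>z. k) \<in> EXPS"
proof -
  have "(\<lambda>z::(real^'a) \<times> (real^'a). k * exp (0 \<bullet> z)) \<in> EXPS" by (intro EX_scale EX_base)
  then show ?thesis by simp
qed

lemma EXPS_mult_exp: "f \<in> EXPS \<Longrightarrow> (\<lambda>z. exp (w \<bullet> z) * f z) \<in> EXPS"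
proof (induction rule: EXPS.induct)
  case (EX_base v)
  have "(\<lambda>z::(real^'a) \<times> (real^'a). exp ((w + v) \<bullet> z)) \<in> EXPS" by (rule EXPS.EX_base)
  then show ?case by (simp add: inner_add_left exp_add)
next
  case (EX_add f g)
  then show ?case using EXPS.EX_add[OF EX_add.IH] by (simp add: distrib_left)
next
  case (EX_scale f k)
  then show ?case using EXPS.EX_scale[OF EX_scale.IH, of k] by (simp add: algebra_simps)
qed

lemma EXPS_mult: "f \<in> EXPS \<Longrightarrow> g \<in> EXPS \<Longrightarrow> (\<lambda>z. f z * g z) \<in> EXPS"
proof (induction rule: EXPS.induct)
  case (EX_base w)
  then show ?case by (rule EXPS_mult_exp)
next
  case (EX_add f1 f2)
  then show ?case using EXPS.EX_add[of "\<lambda>z. f1 z * g z" "\<lambda>z. f2 z * g z"] by (simp add: distrib_right)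
next
  case (EX_scale f k)
  then show ?case using EXPS.EX_scale[of "\<lambda>z. f z * g z" k] by (simp add: algebra_simps)
qed

lemma EXPS_cont: "f \<in> EXPS \<Longrightarrow> continuous_on S f"
  by (induction rule: EXPS.induct) (intro continuous_intros | assumption)+

lemma EXPS_sep:
  fixes z z' :: "(real^'p) \<times> (real^'p)"
  assumes "z \<noteq> z'" shows "\<exists>f\<in>EXPS. f z \<noteq> f z'"
proof -
  define w where "w = z - z'"
  have "w \<bullet> w > 0" using assms unfolding w_def by simp
  then have "w \<bullet> z \<noteq> w \<bullet> z'" unfolding w_def by (simp add: inner_diff_right inner_diff_left)
  then have "exp (w \<bullet> z) \<noteq> exp (w \<bullet> z')" by simp
  show ?thesis
  proof (rule bexI[of _ "\<lambda>z. exp (w \<bullet> z)"])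
    show "exp (w \<bullet> z) \<noteq> exp (w \<bullet> z')" by fact
    show "(\<lambda>z. exp (w \<bullet> z)) \<in> EXPS" by (rule EX_base)
  qed
qed

definition Rep :: "(real \<Rightarrow> real) \<Rightarrow> real \<Rightarrow> ((real^'p) \<times> (real^'p) \<Rightarrow> real) \<Rightarrow> bool" where
  "Rep \<sigma> M f \<longleftrightarrow> (\<exists>(n::nat) P (m::nat) Q. (\<forall>i<n. P i \<in> NS \<sigma> M) \<and> (\<forall>i<m. Q i \<in> NS \<sigma> M) \<and>
     (\<forall>x x'. (f (x,x') + f (x',x))/2 = (\<Sum>i<n. P i x * P i x') - (\<Sum>i<m. Q i x * Q i x')))"

lemma sum_cat_prod:
  "(\<Sum>i<n1+n2. cat n1 P1 P2 i x * cat n1 P1 P2 i x') = (\<Sum>i<n1. P1 i x * P1 i x') + (\<Sum>i<n2. (P2 i x * P2 i x' :: real))"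
proof -
  have "(\<Sum>i<n1+n2. cat n1 P1 P2 i x * cat n1 P1 P2 i x') = (\<Sum>i<n1+n2. cat n1 (\<lambda>i. P1 i x * P1 i x') (\<lambda>i. P2 i x * P2 i x') i)"
    by (rule sum.cong) (auto simp: cat_def)
  then show ?thesis by (simp add: sum_cat)
qed

lemma EXPS_Rep:
  assumes E: "\<And>w::real^'p. (\<lambda>x. exp (w \<bullet> x)) \<in> NS \<sigma> M"
  shows "f \<in> EXPS \<Longrightarrow> Rep \<sigma> M (f :: (real^'p) \<times> (real^'p) \<Rightarrow> real)"
proof (induction rule: EXPS.induct)
  case (EX_base w)
  obtain w1 w2 where w: "w = (w1, w2)" by (cases w)
  define P where "P = (\<lambda>(i::nat) (x::real^'p). (1/2) * (exp (w1 \<bullet> x) + exp (w2 \<bullet> x)))"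
  define Q where "Q = (\<lambda>(i::nat) (x::real^'p). (1/2) * (exp (w1 \<bullet> x) - exp (w2 \<bullet> x)))"
  have PN: "P i \<in> NS \<sigma> M" for i
  proof -
    have "(\<lambda>x::real^'p. (1/2) * (exp (w1 \<bullet> x) + exp (w2 \<bullet> x))) \<in> NS \<sigma> M"
      by (intro NS_scale NS_add E)
    moreover have "P i = (\<lambda>x::real^'p. (1/2) * (exp (w1 \<bullet> x) + exp (w2 \<bullet> x)))"
      unfolding P_def by simp
    ultimately show ?thesis by simp
  qed
  have QN: "Q i \<in> NS \<sigma> M" for i
  proof -
    have "(\<lambda>x::real^'p. (1/2) * (exp (w1 \<bullet> x) + (-1) * exp (w2 \<bullet> x))) \<in> NS \<sigma> M"
      by (intro NS_scale NS_add E)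
    then show ?thesis unfolding Q_def by simp
  qed
  have "\<forall>x x'. (exp (w \<bullet> (x,x')) + exp (w \<bullet> (x',x)))/2 = (\<Sum>i<1. P i x * P i x') - (\<Sum>i<1. Q i x * Q i x')"
    unfolding w P_def Q_def by (simp add: exp_add algebra_simps)
  then show ?case unfolding Rep_def using PN QN by blast
next
  case (EX_add f g)
  from EX_add.IH(1) obtain n1 :: nat and P1 and m1 :: nat and Q1 where 1: "\<forall>i<n1. P1 i \<in> NS \<sigma> M" "\<forall>i<m1. Q1 i \<in> NS \<sigma> M"
    "\<forall>x x'. (f (x,x') + f (x',x))/2 = (\<Sum>i<n1. P1 i x * P1 i x') - (\<Sum>i<m1. Q1 i x * Q1 i x')"
    unfolding Rep_def by blast
  from EX_add.IH(2) obtain n2 :: nat and P2 and m2 :: nat and Q2 where 2: "\<forall>i<n2. P2 i \<in> NS \<sigma> M" "\<forall>i<m2. Q2 i \<in> NS \<sigma> M"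
    "\<forall>x x'. (g (x,x') + g (x',x))/2 = (\<Sum>i<n2. P2 i x * P2 i x') - (\<Sum>i<m2. Q2 i x * Q2 i x')"
    unfolding Rep_def by blast
  have PN: "\<forall>i<n1+n2. cat n1 P1 P2 i \<in> NS \<sigma> M" using 1(1) 2(1) by (auto simp: cat_def)
  have QN: "\<forall>i<m1+m2. cat m1 Q1 Q2 i \<in> NS \<sigma> M" using 1(2) 2(2) by (auto simp: cat_def)
  have "\<forall>x x'. ((f (x,x') + g (x,x')) + (f (x',x) + g (x',x)))/2
     = (\<Sum>i<n1+n2. cat n1 P1 P2 i x * cat n1 P1 P2 i x') - (\<Sum>i<m1+m2. cat m1 Q1 Q2 i x * cat m1 Q1 Q2 i x')"
  proof (intro allI)
    fix x x'
    have "((f (x,x') + g (x,x')) + (f (x',x) + g (x',x)))/2 = (f (x,x') + f (x',x))/2 + (g (x,x') + g (x',x))/2"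
      by (simp add: field_simps)
    then show "((f (x,x') + g (x,x')) + (f (x',x) + g (x',x)))/2
     = (\<Sum>i<n1+n2. cat n1 P1 P2 i x * cat n1 P1 P2 i x') - (\<Sum>i<m1+m2. cat m1 Q1 Q2 i x * cat m1 Q1 Q2 i x')"
      unfolding sum_cat_prod using 1(3) 2(3) by simp
  qed
  then show ?case unfolding Rep_def using PN QN by blast
next
  case (EX_scale f k)
  from EX_scale.IH obtain n :: nat and P and m :: nat and Q where 1: "\<forall>i<n. P i \<in> NS \<sigma> M" "\<forall>i<m. Q i \<in> NS \<sigma> M"
    "\<forall>x x'. (f (x,x') + f (x',x))/2 = (\<Sum>i<n. P i x * P i x') - (\<Sum>i<m. Q i x * Q i x')"
    unfolding Rep_def by blast
  show ?case
  proof (cases "k \<ge> 0")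
    case True
    define P' where "P' i x = sqrt k * P i x" for i x
    define Q' where "Q' i x = sqrt k * Q i x" for i x
    have PN: "\<forall>i<n. P' i \<in> NS \<sigma> M" using 1(1) unfolding P'_def by (auto intro: NS_scale)
    have QN: "\<forall>i<m. Q' i \<in> NS \<sigma> M" using 1(2) unfolding Q'_def by (auto intro: NS_scale)
    have "\<forall>x x'. (k * f (x,x') + k * f (x',x))/2 = (\<Sum>i<n. P' i x * P' i x') - (\<Sum>i<m. Q' i x * Q' i x')"
    proof (intro allI)
      fix x x'
      have "(k * f (x,x') + k * f (x',x))/2 = k * ((f (x,x') + f (x',x))/2)" by (simp add: field_simps)
      also have "\<dots> = k * (\<Sum>i<n. P i x * P i x') - k * (\<Sum>i<m. Q i x * Q i x')"
        using 1(3) by (simp add: right_diff_distrib)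
      also have "\<dots> = (\<Sum>i<n. P' i x * P' i x') - (\<Sum>i<m. Q' i x * Q' i x')"
      proof -
        have sk2: "sqrt k * (sqrt k * X) = k * X" for X
          using True by (simp add: mult.assoc[symmetric])
        show ?thesis unfolding P'_def Q'_def sum_distrib_left
          by (simp add: algebra_simps sk2)
      qed
      finally show "(k * f (x,x') + k * f (x',x))/2 = (\<Sum>i<n. P' i x * P' i x') - (\<Sum>i<m. Q' i x * Q' i x')" .
    qed
    then show ?thesis unfolding Rep_def using PN QN by blast
  next
    case False
    define P' where "P' i x = sqrt (-k) * Q i x" for i x
    define Q' where "Q' i x = sqrt (-k) * P i x" for i x
    have PN: "\<forall>i<m. P' i \<in> NS \<sigma> M" using 1(2) unfolding P'_def by (auto intro: NS_scale)
    have QN: "\<forall>i<n. Q' i \<in> NS \<sigma> M" using 1(1) unfolding Q'_def by (auto intro: NS_scale)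
    have "\<forall>x x'. (k * f (x,x') + k * f (x',x))/2 = (\<Sum>i<m. P' i x * P' i x') - (\<Sum>i<n. Q' i x * Q' i x')"
    proof (intro allI)
      fix x x'
      have "(k * f (x,x') + k * f (x',x))/2 = k * ((f (x,x') + f (x',x))/2)" by (simp add: field_simps)
      also have "\<dots> = (-k) * (\<Sum>i<m. Q i x * Q i x') - (-k) * (\<Sum>i<n. P i x * P i x')"
        unfolding 1(3)[rule_format, of x x'] by (simp add: algebra_simps)
      also have "\<dots> = (\<Sum>i<m. P' i x * P' i x') - (\<Sum>i<n. Q' i x * Q' i x')"
      proof -
        have sk2: "sqrt (-k) * (sqrt (-k) * X) = (-k) * X" for X
          using False by (simp add: mult.assoc[symmetric])
        show ?thesis unfolding P'_def Q'_def sum_distrib_left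
          by (simp add: algebra_simps sk2)
      qed
      finally show "(k * f (x,x') + k * f (x',x))/2 = (\<Sum>i<m. P' i x * P' i x') - (\<Sum>i<n. Q' i x * Q' i x')" .
    qed
    then show ?thesis unfolding Rep_def using PN QN by blast
  qed
qed

lemma cube_cbox: "cube M = cbox (-(\<chi> i. M)) (\<chi> i. M)"
  unfolding cube_def by (auto simp: mem_box_cart abs_le_iff) (metis minus_le_iff)+

lemma compact_cube: "compact (cube M)"
  unfolding cube_cbox by simp

lemma relu_cont: "continuous_on UNIV relu"
  unfolding relu_def by (intro continuous_intros)

lemma NS_bounded:
  fixes f :: "real^'p \<Rightarrow> real"
  assumes sc: "continuous_on UNIV \<sigma>" and f: "f \<in> NS \<sigma> M"
  shows "\<exists>B. \<forall>x\<in>cube M. \<bar>f x\<bar> \<le> B"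
proof -
  obtain T a b c where 1: "\<forall>x\<in>cube M. \<bar>f x - netf \<sigma> T a b c x\<bar> < 1"
  proof -
    from f have "\<forall>\<delta>>0. \<exists>T a b c. \<forall>x\<in>cube M. \<bar>f x - netf \<sigma> T a b c x\<bar> < \<delta>"
      unfolding NS_def by simp
    then have "\<exists>T a b c. \<forall>x\<in>cube M. \<bar>f x - netf \<sigma> T a b c x\<bar> < 1" by simp
    then show ?thesis using that by blast
  qed
  have "continuous_on (cube M) (netf \<sigma> T a b c)"
    unfolding netf_def[abs_def]
    by (intro continuous_intros continuous_on_compose2[OF sc]) auto
  then have "compact (netf \<sigma> T a b c ` cube M)"
    using compact_cube by (rule compact_continuous_image)
  then have "bounded (netf \<sigma> T a b c ` cube M)" by (rule compact_imp_bounded)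
  then obtain B where B: "\<forall>y\<in>netf \<sigma> T a b c ` cube M. \<bar>y\<bar> \<le> B" unfolding bounded_real by blast
  have "\<forall>x\<in>cube M. \<bar>f x\<bar> \<le> B + 1"
  proof
    fix x :: "real^'p" assume x: "x \<in> cube M"
    then have "\<bar>netf \<sigma> T a b c x\<bar> \<le> B" "\<bar>f x - netf \<sigma> T a b c x\<bar> < 1" using B 1 by auto
    then show "\<bar>f x\<bar> \<le> B + 1" by linarith
  qed
  then show ?thesis by blast
qed



lemma prod_err:
  fixes u u' v v' B e :: real
  assumes "\<bar>u\<bar> \<le> B" "\<bar>u'\<bar> \<le> B" "\<bar>u - v\<bar> \<le> e" "\<bar>u' - v'\<bar> \<le> e" "e \<le> 1"
  shows "\<bar>u * u' - v * v'\<bar> \<le> (2*B+1)*e"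
proof -
  have v': "\<bar>v'\<bar> \<le> B + 1" using assms(2,4,5) by linarith
  have eq: "u * u' - v * v' = u * (u' - v') + v' * (u - v)" by (simp add: algebra_simps)
  have "\<bar>u * (u' - v') + v' * (u - v)\<bar> \<le> \<bar>u * (u' - v')\<bar> + \<bar>v' * (u - v)\<bar>" by (rule abs_triangle_ineq)
  then have "\<bar>u * u' - v * v'\<bar> \<le> \<bar>u\<bar> * \<bar>u' - v'\<bar> + \<bar>v'\<bar> * \<bar>u - v\<bar>"
    unfolding eq abs_mult .
  also have "\<dots> \<le> B * e + (B + 1) * e"
  proof (rule add_mono)
    show "\<bar>u\<bar> * \<bar>u' - v'\<bar> \<le> B * e"
      by (rule mult_mono) (use assms in auto)
    show "\<bar>v'\<bar> * \<bar>u - v\<bar> \<le> (B + 1) * e"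
      by (rule mult_mono) (use assms v' in auto)
  qed
  finally show ?thesis by (simp add: algebra_simps)
qed

lemma netf_pad:
  assumes "T \<le> T'"
  shows "netf \<sigma> T' (\<lambda>s. if s < T then a s else 0) b c x = netf \<sigma> T a b c x"
proof -
  have "netf \<sigma> T' (\<lambda>s. if s < T then a s else 0) b c x = (\<Sum>s<T. (if s < T then a s else 0) * \<sigma> (b s \<bullet> x + c s))"
    unfolding netf_def using assms by (intro sum.mono_neutral_right) auto
  then show ?thesis unfolding netf_def by simp
qed

lemma packed_net:
  fixes b :: "nat \<Rightarrow> nat \<Rightarrow> real^'p"
  assumes Tc: "Tc > 0" and j: "j < n" and T: "n * Tc \<le> T"
  shows "shallow_net \<sigma> T (\<lambda>j t. if j < n \<and> t div Tc = j then a j (t mod Tc) else 0)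
           (\<lambda>t. b (t div Tc) (t mod Tc)) (\<lambda>t. c (t div Tc) (t mod Tc)) x j
         = netf \<sigma> Tc (a j) (b j) (c j) x"
proof -
  let ?f = "\<lambda>t. (if j < n \<and> t div Tc = j then a j (t mod Tc) else 0) * \<sigma> (b (t div Tc) (t mod Tc) \<bullet> x + c (t div Tc) (t mod Tc))"
  have sub: "{j*Tc..<j*Tc+Tc} \<subseteq> {..<T}"
  proof -
    have "j*Tc + Tc = Suc j * Tc" by simp
    also have "\<dots> \<le> n * Tc" using j by (intro mult_right_mono) auto
    finally show ?thesis using T by auto
  qed
  have zero: "?f t = 0" if "t \<in> {..<T} - {j*Tc..<j*Tc+Tc}" for t
  proof -
    have "t div Tc \<noteq> j"
    proof
      assume "t div Tc = j"
      then have "j * Tc \<le> t \<and> t < j*Tc + Tc" using Tc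
        by (metis add.commute div_times_less_eq_dividend dividend_less_div_times mult.commute)
      then show False using that by auto
    qed
    then show ?thesis by simp
  qed
  have "shallow_net \<sigma> T (\<lambda>j t. if j < n \<and> t div Tc = j then a j (t mod Tc) else 0)
           (\<lambda>t. b (t div Tc) (t mod Tc)) (\<lambda>t. c (t div Tc) (t mod Tc)) x j = (\<Sum>t<T. ?f t)"
    unfolding shallow_net_def by simp
  also have "\<dots> = (\<Sum>t\<in>{j*Tc..<j*Tc+Tc}. ?f t)"
    using sub zero by (intro sum.mono_neutral_right) auto
  also have "\<dots> = (\<Sum>s\<in>{0..<Tc}. ?f (s + j*Tc))"
    using sum.shift_bounds_nat_ivl[of ?f 0 "j*Tc" Tc] by (simp add: add.commute)
  also have "\<dots> = (\<Sum>s<Tc. a j s * \<sigma> (b j s \<bullet> x + c j s))"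
    unfolding atLeast0LessThan using Tc j by (intro sum.cong) auto
  finally show ?thesis unfolding netf_def .
qed

lemma packed_zero:
  assumes "\<not> j < n"
  shows "shallow_net \<sigma> T (\<lambda>j t. if j < n \<and> t div Tc = j then a j (t mod Tc) else 0) B C x j = 0"
  using assms unfolding shallow_net_def by simp

lemma inner_K_trunc:
  assumes "n \<le> K" "\<And>i. \<not> i < n \<Longrightarrow> u i = 0"
  shows "inner_K K u v = (\<Sum>i<n. u i * v i)"
  unfolding inner_K_def using assms by (intro sum.mono_neutral_right) auto



lemma cancel_aux: "(X::real) > 0 \<Longrightarrow> Y > 0 \<Longrightarrow> X * (\<eta> / (Y * X)) = \<eta> / Y"
  by (simp add: field_simps)

lemma side_approx:
  fixes P :: "nat \<Rightarrow> real^'p \<Rightarrow> real" and n :: nat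
  assumes sc: "continuous_on UNIV \<sigma>" and PN: "\<forall>i<n. P i \<in> NS \<sigma> M" and \<eta>: "\<eta> > 0"
  shows "\<exists>Tc::nat. \<exists>A B c. \<forall>K\<ge>n. \<forall>T\<ge>n*Tc. \<forall>x\<in>cube M. \<forall>x'\<in>cube M.
     \<bar>(\<Sum>i<n. P i x * P i x') - inner_K K (shallow_net \<sigma> T A B c x) (shallow_net \<sigma> T A B c x')\<bar> \<le> \<eta>"
proof -
  have "\<forall>i\<in>{..<n}. \<exists>B. \<forall>x\<in>cube M. \<bar>P i x\<bar> \<le> B" using NS_bounded[OF sc] PN by blast
  from bchoice[OF this] obtain Bd where Bd: "\<forall>i\<in>{..<n}. \<forall>x\<in>cube M. \<bar>P i x\<bar> \<le> Bd i" by blast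
  define e where "e i = min 1 (\<eta> / ((real n + 1) * (2 * \<bar>Bd i\<bar> + 1)))" for i
  have epos: "e i > 0" for i using \<eta> by (simp add: e_def)
  have "\<forall>i\<in>{..<n}. \<exists>T a b c. \<forall>x\<in>cube M. \<bar>P i x - netf \<sigma> T a b c x\<bar> < e i"
  proof
    fix i assume "i \<in> {..<n}"
    then have "P i \<in> NS \<sigma> M" using PN by simp
    then have "\<forall>\<delta>>0. \<exists>T a b c. \<forall>x\<in>cube M. \<bar>P i x - netf \<sigma> T a b c x\<bar> < \<delta>"
      unfolding NS_def by simp
    then show "\<exists>T a b c. \<forall>x\<in>cube M. \<bar>P i x - netf \<sigma> T a b c x\<bar> < e i" using epos by blast
  qed
  from bchoice[OF this] obtain Tf where "\<forall>i\<in>{..<n}. \<exists>a b c. \<forall>x\<in>cube M. \<bar>P i x - netf \<sigma> (Tf i) a b c x\<bar> < e i"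
    by blast
  from bchoice[OF this] obtain af where "\<forall>i\<in>{..<n}. \<exists>b c. \<forall>x\<in>cube M. \<bar>P i x - netf \<sigma> (Tf i) (af i) b c x\<bar> < e i"
    by blast
  from bchoice[OF this] obtain bf where "\<forall>i\<in>{..<n}. \<exists>c. \<forall>x\<in>cube M. \<bar>P i x - netf \<sigma> (Tf i) (af i) (bf i) c x\<bar> < e i"
    by blast
  from bchoice[OF this] obtain cf where net: "\<forall>i\<in>{..<n}. \<forall>x\<in>cube M. \<bar>P i x - netf \<sigma> (Tf i) (af i) (bf i) (cf i) x\<bar> < e i"
    by blast
  define Tc where "Tc = 1 + (\<Sum>i<n. Tf i)"
  have Tcpos: "Tc > 0" unfolding Tc_def by simp
  have TfTc: "Tf i \<le> Tc" if "i < n" for i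
  proof -
    have "Tf i \<le> (\<Sum>i<n. Tf i)" using that by (intro member_le_sum) auto
    then show ?thesis unfolding Tc_def by simp
  qed
  define a' where "a' i s = (if s < Tf i then af i s else 0)" for i s
  define A where "A = (\<lambda>j t. if j < n \<and> t div Tc = j then a' j (t mod Tc) else 0)"
  define Bm where "Bm = (\<lambda>t. bf (t div Tc) (t mod Tc))"
  define Cm where "Cm = (\<lambda>t. cf (t div Tc) (t mod Tc))"
  show ?thesis
  proof (rule exI[of _ Tc], rule exI[of _ A], rule exI[of _ Bm], rule exI[of _ Cm], intro allI impI ballI)
    fix K T :: nat and x x' :: "real^'p"
    assume K: "n \<le> K" and T: "n * Tc \<le> T" and x: "x \<in> cube M" and x': "x' \<in> cube M"
    have comp: "shallow_net \<sigma> T A Bm Cm y j = netf \<sigma> (Tf j) (af j) (bf j) (cf j) y" if "j < n" for y j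
    proof -
      have "shallow_net \<sigma> T A Bm Cm y j = netf \<sigma> Tc (a' j) (bf j) (cf j) y"
        unfolding A_def Bm_def Cm_def by (rule packed_net[OF Tcpos that T])
      also have "\<dots> = netf \<sigma> (Tf j) (af j) (bf j) (cf j) y"
        unfolding a'_def by (rule netf_pad[OF TfTc[OF that]])
      finally show ?thesis .
    qed
    have zero: "shallow_net \<sigma> T A Bm Cm y j = 0" if "\<not> j < n" for y j
      unfolding A_def by (rule packed_zero[OF that])
    have "inner_K K (shallow_net \<sigma> T A Bm Cm x) (shallow_net \<sigma> T A Bm Cm x')
        = (\<Sum>i<n. shallow_net \<sigma> T A Bm Cm x i * shallow_net \<sigma> T A Bm Cm x' i)"
      by (rule inner_K_trunc[OF K zero])
    also have "\<dots> = (\<Sum>i<n. netf \<sigma> (Tf i) (af i) (bf i) (cf i) x * netf \<sigma> (Tf i) (af i) (bf i) (cf i) x')"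
      by (intro sum.cong) (auto simp: comp)
    finally have IK: "inner_K K (shallow_net \<sigma> T A Bm Cm x) (shallow_net \<sigma> T A Bm Cm x') = \<dots>" .
    have trm: "\<bar>P i x * P i x' - netf \<sigma> (Tf i) (af i) (bf i) (cf i) x * netf \<sigma> (Tf i) (af i) (bf i) (cf i) x'\<bar>
        \<le> \<eta> / (real n + 1)" if i: "i < n" for i
    proof -
      have "\<bar>P i x * P i x' - netf \<sigma> (Tf i) (af i) (bf i) (cf i) x * netf \<sigma> (Tf i) (af i) (bf i) (cf i) x'\<bar>
          \<le> (2 * \<bar>Bd i\<bar> + 1) * e i"
      proof (rule prod_err)
        show "\<bar>P i x\<bar> \<le> \<bar>Bd i\<bar>" using Bd x i by force
        show "\<bar>P i x'\<bar> \<le> \<bar>Bd i\<bar>" using Bd x' i by force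
        show "\<bar>P i x - netf \<sigma> (Tf i) (af i) (bf i) (cf i) x\<bar> \<le> e i" using net x i by (simp add: less_imp_le)
        show "\<bar>P i x' - netf \<sigma> (Tf i) (af i) (bf i) (cf i) x'\<bar> \<le> e i" using net x' i by (simp add: less_imp_le)
        show "e i \<le> 1" unfolding e_def by simp
      qed
      also have "\<dots> \<le> (2 * \<bar>Bd i\<bar> + 1) * (\<eta> / ((real n + 1) * (2 * \<bar>Bd i\<bar> + 1)))"
        by (intro mult_left_mono) (auto simp: e_def)
      also have "\<dots> = \<eta> / (real n + 1)"
        by (rule cancel_aux) (auto simp: add_pos_nonneg)
      finally show ?thesis .
    qed
    have "\<bar>(\<Sum>i<n. P i x * P i x') - (\<Sum>i<n. netf \<sigma> (Tf i) (af i) (bf i) (cf i) x * netf \<sigma> (Tf i) (af i) (bf i) (cf i) x')\<bar>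
        = \<bar>\<Sum>i<n. P i x * P i x' - netf \<sigma> (Tf i) (af i) (bf i) (cf i) x * netf \<sigma> (Tf i) (af i) (bf i) (cf i) x'\<bar>"
      by (simp add: sum_subtractf)
    also have "\<dots> \<le> (\<Sum>i<n. \<bar>P i x * P i x' - netf \<sigma> (Tf i) (af i) (bf i) (cf i) x * netf \<sigma> (Tf i) (af i) (bf i) (cf i) x'\<bar>)"
      by (rule sum_abs)
    also have "\<dots> \<le> (\<Sum>i<n. \<eta> / (real n + 1))"
      by (intro sum_mono trm) simp
    also have "\<dots> = real n * (\<eta> / (real n + 1))" by simp
    also have "\<dots> \<le> \<eta>" using \<eta> by (simp add: field_simps)
    finally show "\<bar>(\<Sum>i<n. P i x * P i x') - inner_K K (shallow_net \<sigma> T A Bm Cm x) (shallow_net \<sigma> T A Bm Cm x')\<bar> \<le> \<eta>"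
      unfolding IK .
  qed
qed



lemma lin_aux:
  fixes a b sp sq g ip iq e :: real
  assumes "(a + b)/2 = sp - sq" "\<bar>g - a\<bar> < e/2" "\<bar>g - b\<bar> < e/2" "\<bar>sp - ip\<bar> \<le> e/4" "\<bar>sq - iq\<bar> \<le> e/4"
  shows "\<bar>g - (ip - iq)\<bar> < e"
proof -
  have "a + b = 2 * sp - 2 * sq" using assms(1) by simp
  then show ?thesis using assms(2-5) unfolding abs_less_iff abs_le_iff by (elim conjE) (intro conjI; linarith)
qed

theorem theoremA1:
  fixes M :: real
    and Y :: "(real ^ 'k) set"
    and fstar :: "real ^ 'p \<Rightarrow> real ^ 'k"
    and gstar :: "real ^ 'k \<Rightarrow> real ^ 'k \<Rightarrow> real"
    and \<sigma> :: "real \<Rightarrow> real"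
  assumes "M > 0"
    and "closed Y"
    and "continuous_on (cube M) fstar"
    and "fstar ` cube M \<subseteq> Y"
    and "is_kernel Y gstar"
    and "\<exists>g. pd_kernel Y g \<and> pd_on Y (\<lambda>y y'. g y y' - gstar y y')"
    and "\<sigma> = relu \<or>
         ((\<exists>a b. \<sigma> a \<noteq> \<sigma> b) \<and> continuous_on UNIV \<sigma> \<and> bounded (range \<sigma>) \<and> mono \<sigma>)"
  shows "\<forall>\<epsilon>>0. \<exists>N::nat. \<exists>Tp0 Tm0 :: nat \<Rightarrow> nat.
           \<forall>Kp Km. N \<le> Kp \<longrightarrow> N \<le> Km \<longrightarrow>
           (\<forall>Tp Tm. Tp0 Kp \<le> Tp \<longrightarrow> Tm0 Km \<le> Tm \<longrightarrow>
             (\<exists>A::nat \<Rightarrow> nat \<Rightarrow> real. \<exists>B::nat \<Rightarrow> real ^ 'p. \<exists>c::nat \<Rightarrow> real.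
              \<exists>E::nat \<Rightarrow> nat \<Rightarrow> real. \<exists>F::nat \<Rightarrow> real ^ 'p. \<exists>d::nat \<Rightarrow> real.
               \<forall>x\<in>cube M. \<forall>x'\<in>cube M.
                 \<bar>gstar (fstar x) (fstar x')
                   - (inner_K Kp (shallow_net \<sigma> Tp A B c x) (shallow_net \<sigma> Tp A B c x')
                      - inner_K Km (shallow_net \<sigma> Tm E F d x) (shallow_net \<sigma> Tm E F d x'))\<bar> < \<epsilon>))"
proof (intro allI impI)
  fix \<epsilon> :: real assume \<epsilon>: "\<epsilon> > 0"
  obtain H \<alpha> \<beta> \<gamma> c0 where Hs: "\<sigma> c0 \<noteq> 0" "\<forall>s. 0 \<le> H s \<and> H s \<le> 1" "\<forall>\<eta>>0. \<exists>L. \<forall>s\<le>-L. H s < \<eta>"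
     "\<forall>\<eta>>0. \<exists>L. \<forall>s\<ge>L. H s > 1 - \<eta>" "\<forall>s. H s = \<alpha> * \<sigma> s + \<beta> * \<sigma> (s - 1) + \<gamma>"
    using sigma_H[OF assms(7)] by blast
  have sc: "continuous_on UNIV \<sigma>" using assms(7) relu_cont by auto
  have E: "(\<lambda>x::real^'p. exp (w \<bullet> x)) \<in> NS \<sigma> M" for w :: "real^'p"
    by (rule exp_NS[of H \<alpha> \<sigma> \<beta> \<gamma> c0]) (use Hs in auto)
  define S :: "((real^'p) \<times> (real^'p)) set" where "S = cube M \<times> cube M"
  define kf where "kf = (\<lambda>z::(real^'p) \<times> (real^'p). gstar (fstar (fst z)) (fstar (snd z)))"
  have kc: "continuous_on S kf"
  proof -
    have g: "continuous_on (Y \<times> Y) (\<lambda>(y,y'). gstar y y')" using assms(5) unfolding is_kernel_def by blast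
    have i: "continuous_on S (\<lambda>z. (fstar (fst z), fstar (snd z)))" unfolding S_def
      by (intro continuous_on_Pair continuous_on_compose2[OF assms(3)] continuous_intros) auto
    have "continuous_on S (\<lambda>z. (\<lambda>(y,y'). gstar y y') ((\<lambda>z. (fstar (fst z), fstar (snd z))) z))"
      by (rule continuous_on_compose2[OF g i]) (use assms(4) in \<open>auto simp: S_def\<close>)
    then show ?thesis unfolding kf_def by simp
  qed
  have cS: "compact S" unfolding S_def by (intro compact_Times compact_cube)
  have "\<exists>g. g \<in> EXPS \<and> (\<forall>z\<in>S. \<bar>kf z - g z\<bar> < \<epsilon>/2)"
  proof (rule Stone_Weierstrass_HOL[where P="\<lambda>f. f \<in> EXPS"])
    show "compact S" by (rule cS)
    show "(\<lambda>x. c) \<in> EXPS" for c by (rule EXPS_const)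
    show "continuous_on S f" if "f \<in> EXPS" for f using that by (rule EXPS_cont)
    show "(\<lambda>x. f x + g x) \<in> EXPS" if "f \<in> EXPS \<and> g \<in> EXPS" for f g using that by (auto intro: EX_add)
    show "(\<lambda>x. f x * g x) \<in> EXPS" if "f \<in> EXPS \<and> g \<in> EXPS" for f g using that by (auto intro: EXPS_mult)
    show "\<exists>f. f \<in> EXPS \<and> f x \<noteq> f y" if "x \<in> S \<and> y \<in> S \<and> x \<noteq> y" for x y
      using EXPS_sep[of x y] that by blast
    show "continuous_on S kf" by (rule kc)
    show "0 < \<epsilon>/2" using \<epsilon> by simp
  qed
  then obtain f where f: "f \<in> EXPS" "\<forall>z\<in>S. \<bar>kf z - f z\<bar> < \<epsilon>/2" by blast
  from EXPS_Rep[OF E f(1)] obtain n :: nat and P and m :: nat and Q where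
    PN: "\<forall>i<n. P i \<in> NS \<sigma> M" and QN: "\<forall>i<m. Q i \<in> NS \<sigma> M" and
    rep: "\<forall>x x'. (f (x,x') + f (x',x))/2 = (\<Sum>i<n. P i x * P i x') - (\<Sum>i<m. Q i x * Q i x')"
    unfolding Rep_def by blast
  have e4: "\<epsilon>/4 > 0" using \<epsilon> by simp
  obtain TcP :: nat and AP BP CP where sideP: "\<forall>K\<ge>n. \<forall>T\<ge>n*TcP. \<forall>x\<in>cube M. \<forall>x'\<in>cube M.
     \<bar>(\<Sum>i<n. P i x * P i x') - inner_K K (shallow_net \<sigma> T AP BP CP x) (shallow_net \<sigma> T AP BP CP x')\<bar> \<le> \<epsilon>/4"
    using side_approx[OF sc PN e4] by blast
  obtain TcQ :: nat and AQ BQ CQ where sideQ: "\<forall>K\<ge>m. \<forall>T\<ge>m*TcQ. \<forall>x\<in>cube M. \<forall>x'\<in>cube M.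
     \<bar>(\<Sum>i<m. Q i x * Q i x') - inner_K K (shallow_net \<sigma> T AQ BQ CQ x) (shallow_net \<sigma> T AQ BQ CQ x')\<bar> \<le> \<epsilon>/4"
    using side_approx[OF sc QN e4] by blast
  show "\<exists>N::nat. \<exists>Tp0 Tm0 :: nat \<Rightarrow> nat.
           \<forall>Kp Km. N \<le> Kp \<longrightarrow> N \<le> Km \<longrightarrow>
           (\<forall>Tp Tm. Tp0 Kp \<le> Tp \<longrightarrow> Tm0 Km \<le> Tm \<longrightarrow>
             (\<exists>A::nat \<Rightarrow> nat \<Rightarrow> real. \<exists>B::nat \<Rightarrow> real ^ 'p. \<exists>c::nat \<Rightarrow> real.
              \<exists>E::nat \<Rightarrow> nat \<Rightarrow> real. \<exists>F::nat \<Rightarrow> real ^ 'p. \<exists>d::nat \<Rightarrow> real.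
               \<forall>x\<in>cube M. \<forall>x'\<in>cube M.
                 \<bar>gstar (fstar x) (fstar x')
                   - (inner_K Kp (shallow_net \<sigma> Tp A B c x) (shallow_net \<sigma> Tp A B c x')
                      - inner_K Km (shallow_net \<sigma> Tm E F d x) (shallow_net \<sigma> Tm E F d x'))\<bar> < \<epsilon>))"
  proof (rule exI[of _ "max n m"], rule exI[of _ "\<lambda>_. n * TcP"], rule exI[of _ "\<lambda>_. m * TcQ"], intro allI impI)
    fix Kp Km Tp Tm :: nat
    assume Kp: "max n m \<le> Kp" and Km: "max n m \<le> Km" and Tp: "n * TcP \<le> Tp" and Tm: "m * TcQ \<le> Tm"
    show "\<exists>A::nat \<Rightarrow> nat \<Rightarrow> real. \<exists>B::nat \<Rightarrow> real ^ 'p. \<exists>c::nat \<Rightarrow> real.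
              \<exists>E::nat \<Rightarrow> nat \<Rightarrow> real. \<exists>F::nat \<Rightarrow> real ^ 'p. \<exists>d::nat \<Rightarrow> real.
               \<forall>x\<in>cube M. \<forall>x'\<in>cube M.
                 \<bar>gstar (fstar x) (fstar x')
                   - (inner_K Kp (shallow_net \<sigma> Tp A B c x) (shallow_net \<sigma> Tp A B c x')
                      - inner_K Km (shallow_net \<sigma> Tm E F d x) (shallow_net \<sigma> Tm E F d x'))\<bar> < \<epsilon>"
    proof (rule exI[of _ AP], rule exI[of _ BP], rule exI[of _ CP], rule exI[of _ AQ], rule exI[of _ BQ], rule exI[of _ CQ], intro ballI)
      fix x x' :: "real^'p" assume x: "x \<in> cube M" and x': "x' \<in> cube M"
      have sym: "gstar (fstar x') (fstar x) = gstar (fstar x) (fstar x')"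
        using assms(5) assms(4) x x' unfolding is_kernel_def by blast
      have k1: "\<bar>gstar (fstar x) (fstar x') - f (x,x')\<bar> < \<epsilon>/2"
        using f(2) x x' unfolding S_def kf_def by force
      have k2: "\<bar>gstar (fstar x) (fstar x') - f (x',x)\<bar> < \<epsilon>/2"
        using f(2) x x' sym unfolding S_def kf_def by force
      have r: "(f (x,x') + f (x',x))/2 = (\<Sum>i<n. P i x * P i x') - (\<Sum>i<m. Q i x * Q i x')"
        using rep by blast
      have sP: "\<bar>(\<Sum>i<n. P i x * P i x') - inner_K Kp (shallow_net \<sigma> Tp AP BP CP x) (shallow_net \<sigma> Tp AP BP CP x')\<bar> \<le> \<epsilon>/4"
        using sideP Kp Tp x x' by auto
      have sQ: "\<bar>(\<Sum>i<m. Q i x * Q i x') - inner_K Km (shallow_net \<sigma> Tm AQ BQ CQ x) (shallow_net \<sigma> Tm AQ BQ CQ x')\<bar> \<le> \<epsilon>/4"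
        using sideQ Km Tm x x' by auto
      show "\<bar>gstar (fstar x) (fstar x')
                   - (inner_K Kp (shallow_net \<sigma> Tp AP BP CP x) (shallow_net \<sigma> Tp AP BP CP x')
                      - inner_K Km (shallow_net \<sigma> Tm AQ BQ CQ x) (shallow_net \<sigma> Tm AQ BQ CQ x'))\<bar> < \<epsilon>"
        by (rule lin_aux[OF r k1 k2 sP sQ])
    qed
  qed
qed


end
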